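(* Let $\mathsf{Prop}=\{p,\bar p\}$ and let $\mathsf{L}'$ be a monotone fragment of $\mathsf{LTL}(\mathsf{Prop})$ with $\mathbf{X}\in\mathsf{Op}'$ and $\mathbf{U}\notin\mathsf{Op}'$ (and containing at least one proposition). For every $n\in\mathbb{N}$ there is a sample $\mathcal{S}=(\mathcal{P},\mathcal{N})$ of words in $\mathcal{W}(\mathsf{Prop})$, each $w\in\mathcal{S}$ written as $w=u_w\cdot v_w^\omega$, such that $k:=\sum_{w\in\mathcal{S}}(|u_w|+|v_w|)\ge n$ and the minimal size of an $\mathcal{S}$-separating $\mathsf{L}'$-formula is larger than $2^{\sqrt{k}}$.
   Context: $\mathsf{LTL}(\mathsf{Prop})$ has operators: each proposition $q\in\mathsf{Prop}$ (arity 0), $\neg,\mathbf{X},\mathbf{F},\mathbf{G}$ (arity 1), $\vee,\wedge,\mathbf{U}$ (arity 2). A fragment is given by a subset $\mathsf{Op}'$ of these operators, its formulas being those built only from operators in $\mathsf{Op}'$. A fragment is monotone if $\neg\notin\mathsf{Op}'$ and at most one of $\vee,\wedge$ is in $\mathsf{Op}'$. $\mathsf{sz}(\varphi)$ is the number of distinct subformulas of $\varphi$. $\mathcal{W}(\mathsf{Prop})=\{u\cdot v^\omega: u,v\in(2^{\mathsf{Prop}})^*,\ u\cdot v\ne\varepsilon\}$, where for $v=\varepsilon$ the word is the finite word $u$. For a word $w$, $|w|\in\mathbb{N}\cup\{\infty\}$ is its length and $w[j:]$ its suffix from position $j$. Semantics: $w\models q$ iff $q\in w[0]$; Boolean connectives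 as usual; $w\models\mathbf{X}\varphi$ iff $|w|\ge2$ and $w[1:]\models\varphi$; $w\models\mathbf{F}\varphi$ iff $\exists j<|w|$, $w[j:]\models\varphi$; $w\models\mathbf{G}\varphi$ iff $\forall j<|w|$, $w[j:]\models\varphi$; $w\models\varphi_1\mathbf{U}\varphi_2$ iff $\exists j<|w|$ with $w[j:]\models\varphi_2$ and $w[k:]\models\varphi_1$ for all $k<j$. A formula is $\mathcal{S}$-separating if it is satisfied by every word of $\mathcal{P}$ and by no word of $\mathcal{N}$. *)

theory Defs
  imports Complex_Main
begin

datatype prop2 = P | Pbar

datatype 'p ltl =
    Atom 'p
  | Neg "'p ltl"
  | Next "'p ltl"
  | Fut "'p ltl"
  | Glob "'p ltl"
  | Or "'p ltl" "'p ltl"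
  | And "'p ltl" "'p ltl"
  | Until "'p ltl" "'p ltl"

datatype 'p ltl_op = OAtom 'p | ONeg | ONext | OFut | OGlob | OOr | OAnd | OUntil

primrec ops :: "'p ltl \<Rightarrow> 'p ltl_op set" where
  "ops (Atom q) = {OAtom q}"
| "ops (Neg f) = insert ONeg (ops f)"
| "ops (Next f) = insert ONext (ops f)"
| "ops (Fut f) = insert OFut (ops f)"
| "ops (Glob f) = insert OGlob (ops f)"
| "ops (Or f g) = insert OOr (ops f \<union> ops g)"
| "ops (And f g) = insert OAnd (ops f \<union> ops g)"
| "ops (Until f g) = insert OUntil (ops f \<union> ops g)"

definition in_fragment :: "'p ltl_op set \<Rightarrow> 'p ltl \<Rightarrow> bool" where
  "in_fragment Op' f \<longleftrightarrow> ops f \<subseteq> Op'"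

definition monotone_fragment :: "'p ltl_op set \<Rightarrow> bool" where
  "monotone_fragment Op' \<longleftrightarrow> ONeg \<notin> Op' \<and> \<not> (OOr \<in> Op' \<and> OAnd \<in> Op')"

primrec subformulas :: "'p ltl \<Rightarrow> 'p ltl set" where
  "subformulas (Atom q) = {Atom q}"
| "subformulas (Neg f) = insert (Neg f) (subformulas f)"
| "subformulas (Next f) = insert (Next f) (subformulas f)"
| "subformulas (Fut f) = insert (Fut f) (subformulas f)"
| "subformulas (Glob f) = insert (Glob f) (subformulas f)"
| "subformulas (Or f g) = insert (Or f g) (subformulas f \<union> subformulas g)"
| "subformulas (And f g) = insert (And f g) (subformulas f \<union> subformulas g)"
| "subformulas (Until f g) = insert (Until f g) (subformulas f \<union> subformulas g)"

definition sz :: "'p ltl \<Rightarrow> nat" where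
  "sz f = card (subformulas f)"

text \<open>A word u.v^omega is represented by the pair (u, v); if v = [] it is the finite word u.\<close>
type_synonym 'p word = "'p set list \<times> 'p set list"

definition valid_word :: "'p word \<Rightarrow> bool" where
  "valid_word w \<longleftrightarrow> fst w @ snd w \<noteq> []"

definition pos_ok :: "'p word \<Rightarrow> nat \<Rightarrow> bool" where
  "pos_ok w i \<longleftrightarrow> snd w \<noteq> [] \<or> i < length (fst w)"

definition letter :: "'p word \<Rightarrow> nat \<Rightarrow> 'p set" where
  "letter w i = (if i < length (fst w) then fst w ! i
                 else snd w ! ((i - length (fst w)) mod length (snd w)))"

primrec holds :: "'p word \<Rightarrow> nat \<Rightarrow> 'p ltl \<Rightarrow> bool" where
  "holds w i (Atom q) \<longleftrightarrow> q \<in> letter w i"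
| "holds w i (Neg f) \<longleftrightarrow> \<not> holds w i f"
| "holds w i (Next f) \<longleftrightarrow> pos_ok w (Suc i) \<and> holds w (Suc i) f"
| "holds w i (Fut f) \<longleftrightarrow> (\<exists>j\<ge>i. pos_ok w j \<and> holds w j f)"
| "holds w i (Glob f) \<longleftrightarrow> (\<forall>j\<ge>i. pos_ok w j \<longrightarrow> holds w j f)"
| "holds w i (Or f g) \<longleftrightarrow> holds w i f \<or> holds w i g"
| "holds w i (And f g) \<longleftrightarrow> holds w i f \<and> holds w i g"
| "holds w i (Until f g) \<longleftrightarrow>
     (\<exists>j\<ge>i. pos_ok w j \<and> holds w j g \<and> (\<forall>k. i \<le> k \<and> k < j \<longrightarrow> holds w k f))"

definition sat :: "'p word \<Rightarrow> 'p ltl \<Rightarrow> bool" where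
  "sat w f \<longleftrightarrow> holds w 0 f"

definition separating :: "'p word set \<Rightarrow> 'p word set \<Rightarrow> 'p ltl \<Rightarrow> bool" where
  "separating Pw Nw f \<longleftrightarrow> (\<forall>w\<in>Pw. sat w f) \<and> (\<forall>w\<in>Nw. \<not> sat w f)"

definition sample_size :: "'p word set \<Rightarrow> 'p word set \<Rightarrow> nat" where
  "sample_size Pw Nw =
     (\<Sum>w\<in>Pw. length (fst w) + length (snd w)) + (\<Sum>w\<in>Nw. length (fst w) + length (snd w))"

end

theory Submission
  imports Defs
begin


definition gg :: "nat \<Rightarrow> nat \<Rightarrow> real" where
  "gg a r = fact a * fact r / fact (a + r + 1)"

lemma gg_aux: "F > 0 \<Longrightarrow> (x::real) \<ge> 0 \<Longrightarrow> y \<ge> 0 \<Longrightarrow>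
   A * ((y + 1) * R) / ((x + y + 2) * F) = A * R / F - ((x + 1) * A) * R / ((x + y + 2) * F)"
proof -
  assume F: "F > 0" and x: "x \<ge> 0" and y: "y \<ge> 0"
  have d: "(x + y + 2) * F \<noteq> 0" using F x y by simp
  have "A * ((y + 1) * R) + ((x + 1) * A) * R = (A * R / F) * ((x + y + 2) * F)"
    using F by (simp add: field_simps)
  then have "A * ((y + 1) * R) / ((x + y + 2) * F) + ((x + 1) * A) * R / ((x + y + 2) * F) = A * R / F"
    using d by (simp add: add_divide_distrib[symmetric])
  then show ?thesis by linarith
qed

lemma gg_rec: "gg a (Suc r) = gg a r - gg (Suc a) r"
proof -
  have e1: "fact (a + Suc r + 1) = (of_nat a + of_nat r + 2 :: real) * fact (a + r + 1)"
    by (simp add: fact_Suc algebra_simps)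
  have e2: "fact (Suc a + r + 1) = (of_nat a + of_nat r + 2 :: real) * fact (a + r + 1)"
    by (simp add: fact_Suc algebra_simps)
  have e3: "(fact (Suc r) :: real) = (of_nat r + 1) * fact r" by (simp add: fact_Suc)
  have e4: "(fact (Suc a) :: real) = (of_nat a + 1) * fact a" by (simp add: fact_Suc)
  show ?thesis
    unfolding gg_def e1 e2 e3 e4
    by (rule gg_aux) auto
qed

lemma gg_int: "(\<forall>i\<in>{Suc a..Suc a + r}. i dvd M) \<Longrightarrow> real M * gg a r \<in> \<int>"
proof (induction r arbitrary: a)
  case 0
  then have "Suc a dvd M" by auto
  then obtain c where c: "M = Suc a * c" by blast
  have f: "(fact (Suc a) :: real) = real (Suc a) * fact a" by (simp only: fact_Suc)
  have g0: "gg a 0 = fact a / fact (Suc a)" by (simp add: gg_def del: fact_Suc)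
  also have "\<dots> = fact a / (real (Suc a) * fact a)" using f by simp
  also have "\<dots> = 1 / real (Suc a)" by simp
  finally have "real M * gg a 0 = real (Suc a * c) / real (Suc a)" using c by simp
  also have "\<dots> = real c" by (simp only: of_nat_mult) (simp del: of_nat_Suc)
  finally have "real M * gg a 0 = real c" .
  then show ?case by simp
next
  case (Suc r)
  have h1: "real M * gg a r \<in> \<int>"
    using Suc.prems by (intro Suc.IH) auto
  have h2: "real M * gg (Suc a) r \<in> \<int>"
    using Suc.prems by (intro Suc.IH) auto
  have "real M * gg a (Suc r) = real M * gg a r - real M * gg (Suc a) r"
    by (simp add: gg_rec algebra_simps)
  then show ?case using h1 h2 by simp
qed

lemma gg_pos: "gg a r > 0" unfolding gg_def by simp

lemma lcm_bound:
  assumes "1 \<le> r"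
  shows "((real (a + r + 1)) / real r) ^ r \<le> real (Lcm {Suc a..Suc a + r})"
proof -
  define M where "M = Lcm {Suc a..Suc a + r}"
  have M0: "M \<noteq> 0" unfolding M_def by (simp add: Lcm_0_iff_nat)
  have "real M * gg a r \<in> \<int>" by (rule gg_int) (auto simp: M_def)
  moreover have "real M * gg a r > 0" using M0 gg_pos by simp
  ultimately have ge1: "real M * gg a r \<ge> 1"
    by (metis Ints_cases of_int_0_less_iff of_int_1_le_iff zero_less_imp_eq_int int_one_le_iff_zero_less less_irrefl)
  have c: "real ((a + r + 1) choose r) = fact (a + r + 1) / (fact r * fact (a + 1))"
    by (subst binomial_fact) auto
  have "fact (a + r + 1) / (fact r * fact (a + 1)) \<le> (fact (a + r + 1) / (fact r * fact a) :: real)"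
    by (intro divide_left_mono mult_left_mono) (auto intro: fact_mono)
  also have "\<dots> = 1 / gg a r" unfolding gg_def by simp
  also have "\<dots> \<le> real M" using ge1 gg_pos[of a r] by (simp add: field_simps)
  finally have "real ((a + r + 1) choose r) \<le> real M" using c by simp
  moreover have "((real (a + r + 1)) / real r) ^ r \<le> real ((a + r + 1) choose r)"
    using binomial_ge_n_over_k_pow_k[of r "a + r + 1"] by simp
  ultimately show ?thesis unfolding M_def by linarith
qed



definition wp :: "prop2 \<Rightarrow> nat \<Rightarrow> prop2 word" where "wp q i = ([], {q} # replicate (i - 1) {})"
definition wn :: "prop2 \<Rightarrow> nat \<Rightarrow> prop2 word" where "wn q i = ([], {} # replicate (i - 1) {q})"
definition zz :: "prop2 \<Rightarrow> prop2 word" where "zz q = ([{q}], [{q}, {}])"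
definition yy :: "prop2 \<Rightarrow> prop2 word" where "yy q = ([{}], [{}, {q}])"

primrec xd :: "'p ltl \<Rightarrow> nat" where
  "xd (Atom q) = 0"
| "xd (Neg f) = xd f"
| "xd (Next f) = Suc (xd f)"
| "xd (Fut f) = 0"
| "xd (Glob f) = 0"
| "xd (Or f g) = max (xd f) (xd g)"
| "xd (And f g) = max (xd f) (xd g)"
| "xd (Until f g) = max (xd f) (xd g)"

lemma nth_aux: "0 < i \<Longrightarrow> k < i \<Longrightarrow> (a # replicate (i - 1) b) ! k = (if k = 0 then a else b)"
  by (cases k) auto

lemma letter_wp: assumes "0 < i" shows "letter (wp q i) p = (if i dvd p then {q} else {})"
proof -
  have m: "p mod i < i" using assms by simp
  have "letter (wp q i) p = ({q} # replicate (i - 1) {}) ! (p mod i)" unfolding letter_def wp_def using assms by (simp add: Suc_pred)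
  also have "\<dots> = (if p mod i = 0 then {q} else {})" by (rule nth_aux[OF assms m])
  finally show ?thesis by (simp add: dvd_eq_mod_eq_0)
qed

lemma letter_wn: assumes "0 < i" shows "letter (wn q i) p = (if i dvd p then {} else {q})"
proof -
  have m: "p mod i < i" using assms by simp
  have "letter (wn q i) p = ({} # replicate (i - 1) {q}) ! (p mod i)" unfolding letter_def wn_def using assms by (simp add: Suc_pred)
  also have "\<dots> = (if p mod i = 0 then {} else {q})" by (rule nth_aux[OF assms m])
  finally show ?thesis by (simp add: dvd_eq_mod_eq_0)
qed

lemma mod2_aux: "p \<noteq> 0 \<Longrightarrow> (p - Suc 0) mod Suc (Suc 0) = (if odd p then 0 else (1::nat))"
proof -
  assume "p \<noteq> 0"
  then have "(p - 1) mod 2 = (if odd p then 0 else (1::nat))" by presburger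
  then show ?thesis by (simp add: numeral_2_eq_2)
qed

lemma letter_zz: "letter (zz q) p = (if p = 0 \<or> odd p then {q} else {})"
proof (cases "p = 0")
  case False
  then show ?thesis unfolding letter_def zz_def using mod2_aux[OF False] by simp
qed (simp add: letter_def zz_def)

lemma letter_yy: "letter (yy q) p = (if p \<noteq> 0 \<and> even p then {q} else {})"
proof (cases "p = 0")
  case False
  then show ?thesis unfolding letter_def yy_def using mod2_aux[OF False] by simp
qed (simp add: letter_def yy_def)

lemma snd_ne: "snd (wp q i) \<noteq> []" "snd (wn q i) \<noteq> []" "snd (zz q) \<noteq> []" "snd (yy q) \<noteq> []"
  by (auto simp: wp_def wn_def zz_def yy_def)

lemma pos_ok_inf: "snd w \<noteq> [] \<Longrightarrow> pos_ok w i" by (simp add: pos_ok_def)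

lemma dom:
  assumes a: "snd a \<noteq> []" and b: "snd b \<noteq> []"
  shows "ONeg \<notin> ops \<phi> \<Longrightarrow> OUntil \<notin> ops \<phi> \<Longrightarrow> (\<forall>s. letter a (i+s) \<subseteq> letter b (j+s))
     \<Longrightarrow> holds a i \<phi> \<Longrightarrow> holds b j \<phi>"
proof (induction \<phi> arbitrary: i j)
  case (Atom x)
  then show ?case using Atom.prems(3)[rule_format, of 0] by auto
next
  case (Next f)
  have D1: "\<forall>s. letter a (Suc i + s) \<subseteq> letter b (Suc j + s)"
  proof
    fix s show "letter a (Suc i + s) \<subseteq> letter b (Suc j + s)"
      using Next.prems(3)[rule_format, of "Suc s"] by simp
  qed
  have "holds b (Suc j) f" using Next.IH[OF _ _ D1] Next.prems by simp
  then show ?case by (auto simp: pos_ok_inf[OF b])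
next
  case (Fut f)
  then obtain k where k: "k \<ge> i" "holds a k f" by auto
  have "\<forall>s. letter a (k + s) \<subseteq> letter b (j + (k - i) + s)"
  proof
    fix s show "letter a (k + s) \<subseteq> letter b (j + (k - i) + s)"
      using Fut.prems(3)[rule_format, of "k - i + s"] k(1) by (simp add: add.assoc)
  qed
  then have "holds b (j + (k - i)) f" using Fut.IH[OF _ _ _ k(2)] Fut.prems by simp
  then show ?case by (auto simp: pos_ok_inf[OF b] intro!: exI[of _ "j + (k - i)"])
next
  case (Glob f)
  show ?case
  proof (simp, intro allI impI)
    fix k assume k: "j \<le> k" "pos_ok b k"
    have "\<forall>s. letter a (i + (k - j) + s) \<subseteq> letter b (k + s)"
    proof
      fix s show "letter a (i + (k - j) + s) \<subseteq> letter b (k + s)"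
        using Glob.prems(3)[rule_format, of "k - j + s"] k by (simp add: add.assoc)
    qed
    moreover have "holds a (i + (k - j)) f" using Glob.prems(4) by (auto simp: pos_ok_inf[OF a])
    ultimately show "holds b k f" using Glob.IH Glob.prems by simp
  qed
next
  case (Or f g)
  then show ?case by (metis Un_iff holds.simps(6) insert_iff ops.simps(6))
next
  case (And f g)
  then show ?case by (metis Un_iff holds.simps(7) insert_iff ops.simps(7))
qed simp_all

lemma even_dvd: "even e \<Longrightarrow> e dvd x \<Longrightarrow> even x"
  using dvd_trans by blast

lemma andc:
  fixes Q :: "nat set" and e :: nat and q :: prop2
  assumes Qpos: "\<forall>i\<in>Q. 0 < i" and eQ: "e \<in> Q" and ee: "even e"
  shows "ONeg \<notin> ops \<phi> \<Longrightarrow> OOr \<notin> ops \<phi> \<Longrightarrow> OUntil \<notin> ops \<phi> \<Longrightarrow> xd \<phi> \<le> h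
   \<Longrightarrow> (\<forall>s\<le>h. (\<forall>i\<in>Q. i dvd p i + s) \<longrightarrow> q \<in> letter (zz q) (t+s))
   \<Longrightarrow> (\<forall>i\<in>Q. holds (wp q i) (p i) \<phi>) \<Longrightarrow> holds (zz q) t \<phi>"
proof (induction \<phi> arbitrary: h p t)
  case (Atom x)
  have "x \<in> letter (wp q e) (p e)" using Atom.prems(6) eQ by auto
  then have xq: "x = q" using Qpos eQ by (auto simp: letter_wp split: if_splits)
  have "\<forall>i\<in>Q. i dvd p i + 0"
  proof
    fix i assume "i \<in> Q"
    then have "q \<in> letter (wp q i) (p i)" using Atom.prems(6) xq by auto
    then show "i dvd p i + 0" using Qpos \<open>i \<in> Q\<close> by (auto simp: letter_wp split: if_splits)
  qed
  then show ?case using Atom.prems(5) xq by auto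
next
  case (Next f)
  obtain h' where h: "h = Suc h'" "xd f \<le> h'" using Next.prems(4) by (cases h) auto
  have R: "\<forall>s\<le>h'. (\<forall>i\<in>Q. i dvd Suc (p i) + s) \<longrightarrow> q \<in> letter (zz q) (Suc t + s)"
  proof (intro allI impI)
    fix s assume "s \<le> h'" "\<forall>i\<in>Q. i dvd Suc (p i) + s"
    then show "q \<in> letter (zz q) (Suc t + s)"
      using Next.prems(5)[rule_format, of "Suc s"] h by simp
  qed
  have H: "\<forall>i\<in>Q. holds (wp q i) (Suc (p i)) f" using Next.prems(6) by auto
  have "holds (zz q) (Suc t) f"
    by (rule Next.IH[of h' "\<lambda>i. Suc (p i)" "Suc t"]) (use Next.prems h R H in simp_all)
  then show ?case by (simp add: pos_ok_inf[OF snd_ne(3)])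
next
  case (Fut f)
  obtain k where k: "k \<ge> p e" "holds (wp q e) k f" using Fut.prems(6) eQ by auto
  define t' where "t' = (if odd (t + k) then t else Suc t)"
  have o: "odd (t' + k)" "t' \<ge> t" unfolding t'_def by auto
  have D: "\<forall>s. letter (wp q e) (k + s) \<subseteq> letter (zz q) (t' + s)"
  proof
    fix s
    show "letter (wp q e) (k + s) \<subseteq> letter (zz q) (t' + s)"
    proof (cases "e dvd k + s")
      case True
      then have "even (k + s)" using ee even_dvd by blast
      then have "odd (t' + s)" using o(1) by presburger
      then show ?thesis using Qpos eQ True by (simp add: letter_wp letter_zz)
    qed (use Qpos eQ in \<open>simp add: letter_wp\<close>)
  qed
  have "holds (zz q) t' f" by (rule dom[OF snd_ne(1) snd_ne(3) _ _ D k(2)]) (use Fut.prems in simp_all)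
  then show ?case using o by (auto simp: pos_ok_inf[OF snd_ne(3)])
next
  case (Glob f)
  show ?case
  proof (simp, intro allI impI)
    fix t' assume "t \<le> t'" "pos_ok (zz q) t'"
    define k where "k = (if odd (t' + p e) then p e else Suc (p e))"
    have o: "odd (t' + k)" "k \<ge> p e" unfolding k_def by auto
    have hk: "holds (wp q e) k f" using Glob.prems(6) eQ o by (auto simp: pos_ok_inf[OF snd_ne(1)])
    have D: "\<forall>s. letter (wp q e) (k + s) \<subseteq> letter (zz q) (t' + s)"
    proof
      fix s
      show "letter (wp q e) (k + s) \<subseteq> letter (zz q) (t' + s)"
      proof (cases "e dvd k + s")
        case True
        then have "even (k + s)" using ee even_dvd by blast
        then have "odd (t' + s)" using o(1) by presburger
        then show ?thesis using Qpos eQ True by (simp add: letter_wp letter_zz)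
      qed (use Qpos eQ in \<open>simp add: letter_wp\<close>)
    qed
    have "holds (zz q) t' f" by (rule dom[OF snd_ne(1) snd_ne(3) _ _ D hk]) (use Glob.prems in simp_all)
    then show "holds (zz q) t' f" by simp
  qed
next
  case (And f g)
  have "holds (zz q) t f"
    by (rule And.IH(1)[of h p]) (use And.prems in auto)
  moreover have "holds (zz q) t g"
    by (rule And.IH(2)[of h p]) (use And.prems in auto)
  ultimately show ?case by simp
qed simp_all

lemma orc:
  fixes Q :: "nat set" and e :: nat and q :: prop2
  assumes Qpos: "\<forall>i\<in>Q. 0 < i" and eQ: "e \<in> Q" and ee: "even e"
  shows "ONeg \<notin> ops \<phi> \<Longrightarrow> OAnd \<notin> ops \<phi> \<Longrightarrow> OUntil \<notin> ops \<phi> \<Longrightarrow> xd \<phi> \<le> h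
   \<Longrightarrow> (\<forall>s\<le>h. (\<forall>i\<in>Q. i dvd p i + s) \<longrightarrow> q \<notin> letter (yy q) (t+s))
   \<Longrightarrow> holds (yy q) t \<phi> \<Longrightarrow> (\<exists>i\<in>Q. holds (wn q i) (p i) \<phi>)"
proof (induction \<phi> arbitrary: h p t)
  case (Atom x)
  have xq: "x = q" "q \<in> letter (yy q) t" using Atom.prems(6) by (auto simp: letter_yy split: if_splits)
  then have "\<not> (\<forall>i\<in>Q. i dvd p i + 0)" using Atom.prems(5) by auto
  then obtain i where "i \<in> Q" "\<not> i dvd p i" by auto
  then show ?case using Qpos xq by (auto simp: letter_wn)
next
  case (Next f)
  obtain h' where h: "h = Suc h'" "xd f \<le> h'" using Next.prems(4) by (cases h) auto
  have R: "\<forall>s\<le>h'. (\<forall>i\<in>Q. i dvd Suc (p i) + s) \<longrightarrow> q \<notin> letter (yy q) (Suc t + s)"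
  proof (intro allI impI)
    fix s assume "s \<le> h'" "\<forall>i\<in>Q. i dvd Suc (p i) + s"
    then show "q \<notin> letter (yy q) (Suc t + s)"
      using Next.prems(5)[rule_format, of "Suc s"] h by simp
  qed
  have H: "holds (yy q) (Suc t) f" using Next.prems(6) by auto
  have "\<exists>i\<in>Q. holds (wn q i) (Suc (p i)) f"
    by (rule Next.IH[of h' "\<lambda>i. Suc (p i)" "Suc t"]) (use Next.prems h R H in simp_all)
  then show ?case by (auto simp: pos_ok_inf[OF snd_ne(2)])
next
  case (Fut f)
  obtain t' where k: "t' \<ge> t" "holds (yy q) t' f" using Fut.prems(6) by auto
  define k where "k = (if odd (t' + p e) then p e else Suc (p e))"
  have o: "odd (t' + k)" "k \<ge> p e" unfolding k_def by auto
  have D: "\<forall>s. letter (yy q) (t' + s) \<subseteq> letter (wn q e) (k + s)"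
  proof
    fix s
    show "letter (yy q) (t' + s) \<subseteq> letter (wn q e) (k + s)"
    proof (cases "t' + s \<noteq> 0 \<and> even (t' + s)")
      case True
      then have "odd (k + s)" using o(1) by presburger
      then have "\<not> e dvd k + s" using ee even_dvd by blast
      then show ?thesis using Qpos eQ True by (simp add: letter_wn letter_yy)
    next
      case False
      then have "letter (yy q) (t' + s) = {}" by (subst letter_yy) (simp only: False if_False)
      then show ?thesis by simp
    qed
  qed
  have "holds (wn q e) k f" by (rule dom[OF snd_ne(4) snd_ne(2) _ _ D k(2)]) (use Fut.prems in simp_all)
  then show ?case using o eQ by (auto simp: pos_ok_inf[OF snd_ne(2)])
next
  case (Glob f)
  have "holds (wn q e) (p e) (Glob f)"
  proof (simp, intro allI impI)
    fix k assume "p e \<le> k" "pos_ok (wn q e) k"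
    define t' where "t' = (if odd (t + k) then t else Suc t)"
    have o: "odd (t' + k)" "t' \<ge> t" unfolding t'_def by auto
    have hk: "holds (yy q) t' f" using Glob.prems(6) o by (auto simp: pos_ok_inf[OF snd_ne(4)])
    have D: "\<forall>s. letter (yy q) (t' + s) \<subseteq> letter (wn q e) (k + s)"
    proof
      fix s
      show "letter (yy q) (t' + s) \<subseteq> letter (wn q e) (k + s)"
      proof (cases "t' + s \<noteq> 0 \<and> even (t' + s)")
        case True
        then have "odd (k + s)" using o(1) by presburger
        then have "\<not> e dvd k + s" using ee even_dvd by blast
        then show ?thesis using Qpos eQ True by (simp add: letter_wn letter_yy)
      next
      case False
      then have "letter (yy q) (t' + s) = {}" by (subst letter_yy) (simp only: False if_False)
      then show ?thesis by simp
    qed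
    qed
    have "holds (wn q e) k f" by (rule dom[OF snd_ne(4) snd_ne(2) _ _ D hk]) (use Glob.prems in simp_all)
    then show "holds (wn q e) k f" by simp
  qed
  then show ?case using eQ by blast
next
  case (Or f g)
  show ?case
  proof (cases "holds (yy q) t f")
    case True
    have "\<exists>i\<in>Q. holds (wn q i) (p i) f"
      by (rule Or.IH(1)[of h p t]) (use Or.prems True in auto)
    then show ?thesis by auto
  next
    case False
    then have "holds (yy q) t g" using Or.prems by simp
    have "\<exists>i\<in>Q. holds (wn q i) (p i) g"
      by (rule Or.IH(2)[of h p t]) (use Or.prems \<open>holds (yy q) t g\<close> in auto)
    then show ?thesis by auto
  qed
qed simp_all



lemma sub_size: "x \<in> subformulas \<phi> \<Longrightarrow> size x \<le> size \<phi>"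
  by (induction \<phi>) auto

lemma sub_fin: "finite (subformulas \<phi>)"
  by (induction \<phi>) auto

lemma sub_self: "\<phi> \<in> subformulas \<phi>"
  by (cases \<phi>) auto

lemma card_ins_mono: "finite A \<Longrightarrow> B \<subseteq> A \<Longrightarrow> card B \<le> card (insert x A)"
  by (meson card_mono finite_insert subset_insertI2)

lemma xd_sz: "xd \<phi> < card (subformulas \<phi>)"
proof (induction \<phi>)
  case (Atom x) then show ?case by simp
next
  case (Neg f) then show ?case using card_ins_mono[OF sub_fin[of f], of "subformulas f" "Neg f"] by simp
next
  case (Next f)
  have "Next f \<notin> subformulas f" using sub_size[of "Next f" f] by auto
  then show ?case using Next sub_fin[of f] by simp
next
  case (Fut f) then show ?case using sub_fin[of f] by (simp add: card_gt_0_iff)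
next
  case (Glob f) then show ?case using sub_fin[of f] by (simp add: card_gt_0_iff)
next
  case (Or f g)
  have "card (subformulas f) \<le> card (subformulas (Or f g))" "card (subformulas g) \<le> card (subformulas (Or f g))"
    using card_ins_mono[of "subformulas f \<union> subformulas g"] sub_fin[of f] sub_fin[of g] by auto
  then show ?case using Or by simp
next
  case (And f g)
  have "card (subformulas f) \<le> card (subformulas (And f g))" "card (subformulas g) \<le> card (subformulas (And f g))"
    using card_ins_mono[of "subformulas f \<union> subformulas g"] sub_fin[of f] sub_fin[of g] by auto
  then show ?case using And by simp
next
  case (Until f g)
  have "card (subformulas f) \<le> card (subformulas (Until f g))" "card (subformulas g) \<le> card (subformulas (Until f g))"
    using card_ins_mono[of "subformulas f \<union> subformulas g"] sub_fin[of f] sub_fin[of g] by auto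
  then show ?case using Until by simp
qed

lemma holds_nexts: "snd w \<noteq> [] \<Longrightarrow> holds w p ((Next ^^ k) f) = holds w (p + k) f"
  by (induction k arbitrary: p) (auto simp: pos_ok_inf)

lemma ops_nexts: "ops ((Next ^^ k) (Atom q)) \<subseteq> {ONext, OAtom q}"
  by (induction k) auto

lemma sum_wp: assumes "\<forall>i\<in>Q. 0 < i"
  shows "(\<Sum>w\<in>wp q ` Q. length (fst w) + length (snd w)) = (\<Sum>i\<in>Q. i)"
proof -
  have inj: "inj_on (wp q) Q"
  proof (rule inj_onI)
    fix i j assume "i \<in> Q" "j \<in> Q" "wp q i = wp q j"
    then have "length (snd (wp q i)) = length (snd (wp q j))" by simp
    then show "i = j" using assms \<open>i \<in> Q\<close> \<open>j \<in> Q\<close> by (simp add: wp_def)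
  qed
  show ?thesis
    by (simp add: sum.reindex[OF inj]) (rule sum.cong, auto simp: wp_def assms)
qed

lemma sum_wn: assumes "\<forall>i\<in>Q. 0 < i"
  shows "(\<Sum>w\<in>wn q ` Q. length (fst w) + length (snd w)) = (\<Sum>i\<in>Q. i)"
proof -
  have inj: "inj_on (wn q) Q"
  proof (rule inj_onI)
    fix i j assume "i \<in> Q" "j \<in> Q" "wn q i = wn q j"
    then have "length (snd (wn q i)) = length (snd (wn q j))" by simp
    then show "i = j" using assms \<open>i \<in> Q\<close> \<open>j \<in> Q\<close> by (simp add: wn_def)
  qed
  show ?thesis
    by (simp add: sum.reindex[OF inj]) (rule sum.cong, auto simp: wn_def assms)
qed



theorem proposition4:
  fixes Op' :: "prop2 ltl_op set" and n :: nat
  assumes "monotone_fragment Op'"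
    and "ONext \<in> Op'" and "OUntil \<notin> Op'"
    and "\<exists>q. OAtom q \<in> Op'"
  shows "\<exists>Pw Nw :: prop2 word set.
           finite Pw \<and> finite Nw \<and>
           (\<forall>w\<in>Pw \<union> Nw. valid_word w) \<and>
           sample_size Pw Nw \<ge> n \<and>
           (\<exists>f. in_fragment Op' f \<and> separating Pw Nw f) \<and>
           (\<forall>f. in_fragment Op' f \<and> separating Pw Nw f \<longrightarrow>
                real (sz f) > 2 powr sqrt (real (sample_size Pw Nw)))"
proof -
  obtain q where q: "OAtom q \<in> Op'" using assms(4) by blast
  have noneg: "ONeg \<notin> Op'" using assms(1) by (simp add: monotone_fragment_def)
  define s where "s = n + 9"
  define m where "m = 7 * s"
  define Q where "Q = {m..m+s}"
  define L where "L = Lcm Q"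
  define e where "e = (if even m then m else Suc m)"
  define S where "S = (\<Sum>i\<in>Q. i)"
  have s9: "s \<ge> 9" unfolding s_def by simp
  have Qpos: "\<forall>i\<in>Q. 0 < i" unfolding Q_def m_def s_def by auto
  have finQ: "finite Q" unfolding Q_def by simp
  have eQ: "e \<in> Q" unfolding Q_def e_def using s9 by auto
  have ee: "even e" unfolding e_def by auto
  have L0: "L \<noteq> 0" unfolding L_def using Qpos finQ by (auto simp: Lcm_0_iff_nat)
  have dvdL: "\<forall>i\<in>Q. i dvd L" unfolding L_def by (simp add: dvd_Lcm)
  have Leven: "even L" using dvdL eQ ee even_dvd by blast
  have root: "\<And>x. x < L \<Longrightarrow> (\<forall>i\<in>Q. i dvd x) \<Longrightarrow> x = 0"
  proof -
    fix x assume "x < L" "\<forall>i\<in>Q. i dvd x"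
    then have "L dvd x" unfolding L_def by (simp add: Lcm_dvd_nat)
    then show "x = 0" using \<open>x < L\<close> by (metis dvd_imp_le not_less neq0_conv)
  qed
  have Lb: "8 ^ s \<le> real L"
  proof -
    have h: "((real (m - 1 + s + 1)) / real s) ^ s \<le> real (Lcm {Suc (m - 1)..Suc (m - 1) + s})"
      by (rule lcm_bound) (use s9 in simp)
    have e1: "m - 1 + s + 1 = 8 * s" unfolding m_def using s9 by simp
    have e2: "Suc (m - 1) = m" unfolding m_def using s9 by simp
    have e3: "real (8 * s) / real s = 8" using s9 by simp
    from h show ?thesis unfolding e1 e2 e3 L_def Q_def .
  qed
  have Sn: "n \<le> S"
  proof -
    have "m \<le> S" unfolding S_def using finQ by (intro member_le_sum) (auto simp: Q_def)
    then show ?thesis unfolding m_def s_def by simp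
  qed
  have S9: "S + 3 \<le> 9 * s * s"
  proof -
    have "S \<le> of_nat (card Q) * (m + s)" unfolding S_def by (rule sum_bounded_above) (auto simp: Q_def)
    also have "\<dots> = card Q * (m + s)" by simp
    also have "\<dots> = (s + 1) * (8 * s)" unfolding Q_def m_def by simp
    finally have "S \<le> (s + 1) * (8 * s)" .
    moreover have "9 * s \<le> s * s" using mult_le_mono1[OF s9] .
    moreover have "(s + 1) * (8 * s) = 8 * (s * s) + 8 * s" by (simp add: algebra_simps)
    moreover have "9 * s * s = 9 * (s * s)" by simp
    ultimately show ?thesis using s9 by linarith
  qed
  have big: "\<And>N. L < N \<Longrightarrow> real N > 2 powr sqrt (real (S + 3))"
  proof -
    fix N assume "L < N"
    have "sqrt (real (S + 3)) \<le> sqrt ((real (3 * s))\<^sup>2)"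
    proof (rule real_sqrt_le_mono)
      have "real (S + 3) \<le> real (9 * s * s)" using S9 by (simp only: of_nat_le_iff)
      also have "\<dots> = (real (3 * s))\<^sup>2" by (simp add: power2_eq_square)
      finally show "real (S + 3) \<le> (real (3 * s))\<^sup>2" .
    qed
    also have "\<dots> = real (3 * s)" by (rule real_sqrt_abs[THEN trans]) simp
    finally have "2 powr sqrt (real (S + 3)) \<le> 2 powr real (3 * s)" by (intro powr_mono) auto
    also have "\<dots> = 2 ^ (3 * s)" by (rule powr_realpow) simp
    also have "\<dots> = 8 ^ s" by (simp add: power_mult)
    also have "\<dots> \<le> real L" by (rule Lb)
    also have "\<dots> < real N" using \<open>L < N\<close> by simp
    finally show "real N > 2 powr sqrt (real (S + 3))" .
  qed
  define \<phi>0 where "\<phi>0 = (Next ^^ L) (Atom q)"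
  have frag0: "in_fragment Op' \<phi>0" unfolding in_fragment_def \<phi>0_def
    using ops_nexts[of L q] assms(2) q by blast
  have hold0: "\<And>w. snd w \<noteq> [] \<Longrightarrow> sat w \<phi>0 = (q \<in> letter w L)"
    unfolding sat_def \<phi>0_def by (simp add: holds_nexts)
  show ?thesis
  proof (cases "OOr \<in> Op'")
    case False
    define Pw where "Pw = wp q ` Q"
    define Nw where "Nw = {zz q}"
    have ss: "sample_size Pw Nw = S + 3"
      unfolding sample_size_def Pw_def Nw_def S_def using sum_wp[OF Qpos] by (simp add: zz_def)
    have valid: "\<forall>w\<in>Pw \<union> Nw. valid_word w"
      unfolding Pw_def Nw_def valid_word_def using snd_ne by auto
    have sep0: "separating Pw Nw \<phi>0"
      unfolding separating_def Pw_def Nw_def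
      using hold0 snd_ne dvdL Qpos L0 Leven by (auto simp: letter_wp letter_zz)
    have lower: "\<forall>f. in_fragment Op' f \<and> separating Pw Nw f \<longrightarrow> real (sz f) > 2 powr sqrt (real (sample_size Pw Nw))"
    proof (intro allI impI)
      fix f assume a: "in_fragment Op' f \<and> separating Pw Nw f"
      have ops: "ONeg \<notin> ops f" "OOr \<notin> ops f" "OUntil \<notin> ops f"
        using a noneg False assms(3) by (auto simp: in_fragment_def)
      have "L \<le> xd f"
      proof (rule ccontr)
        assume "\<not> L \<le> xd f"
        then have lt: "xd f < L" by simp
        have R: "\<forall>s'\<le>xd f. (\<forall>i\<in>Q. i dvd (\<lambda>_. 0) i + s') \<longrightarrow> q \<in> letter (zz q) (0 + s')"
        proof (intro allI impI)
          fix s' assume "s' \<le> xd f" "\<forall>i\<in>Q. i dvd (\<lambda>_. 0) i + s'"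
          then have "s' = 0" using root[of s'] lt by simp
          then show "q \<in> letter (zz q) (0 + s')" by (simp add: letter_zz)
        qed
        have P: "\<forall>i\<in>Q. holds (wp q i) ((\<lambda>_. 0) i) f"
          using a unfolding separating_def Pw_def sat_def by auto
        have "holds (zz q) 0 f"
          by (rule andc[OF Qpos eQ ee ops(1) ops(2) ops(3) order_refl R P])
        then show False using a unfolding separating_def Nw_def sat_def by auto
      qed
      then have "L < sz f" using xd_sz[of f] unfolding sz_def by simp
      then show "real (sz f) > 2 powr sqrt (real (sample_size Pw Nw))" using big ss by simp
    qed
    show ?thesis
      by (rule exI[of _ Pw], rule exI[of _ Nw])
         (use valid ss Sn sep0 frag0 lower in \<open>auto simp: Pw_def Nw_def finQ\<close>)
  next
    case True
    have noand: "OAnd \<notin> Op'" using assms(1) True by (simp add: monotone_fragment_def)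
    define Pw where "Pw = {yy q}"
    define Nw where "Nw = wn q ` Q"
    have ss: "sample_size Pw Nw = S + 3"
      unfolding sample_size_def Pw_def Nw_def S_def using sum_wn[OF Qpos] by (simp add: yy_def)
    have valid: "\<forall>w\<in>Pw \<union> Nw. valid_word w"
      unfolding Pw_def Nw_def valid_word_def using snd_ne by auto
    have sep0: "separating Pw Nw \<phi>0"
      unfolding separating_def Pw_def Nw_def
      using hold0 snd_ne dvdL Qpos L0 Leven by (auto simp: letter_wn letter_yy)
    have lower: "\<forall>f. in_fragment Op' f \<and> separating Pw Nw f \<longrightarrow> real (sz f) > 2 powr sqrt (real (sample_size Pw Nw))"
    proof (intro allI impI)
      fix f assume a: "in_fragment Op' f \<and> separating Pw Nw f"
      have ops: "ONeg \<notin> ops f" "OAnd \<notin> ops f" "OUntil \<notin> ops f"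
        using a noneg noand assms(3) by (auto simp: in_fragment_def)
      have "L \<le> xd f"
      proof (rule ccontr)
        assume "\<not> L \<le> xd f"
        then have lt: "xd f < L" by simp
        have R: "\<forall>s'\<le>xd f. (\<forall>i\<in>Q. i dvd (\<lambda>_. 0) i + s') \<longrightarrow> q \<notin> letter (yy q) (0 + s')"
        proof (intro allI impI)
          fix s' assume "s' \<le> xd f" "\<forall>i\<in>Q. i dvd (\<lambda>_. 0) i + s'"
          then have "s' = 0" using root[of s'] lt by simp
          then show "q \<notin> letter (yy q) (0 + s')" by (simp add: letter_yy)
        qed
        have P: "holds (yy q) 0 f"
          using a unfolding separating_def Pw_def sat_def by auto
        have "\<exists>i\<in>Q. holds (wn q i) ((\<lambda>_. 0) i) f"
          by (rule orc[OF Qpos eQ ee ops(1) ops(2) ops(3) order_refl R P])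
        then show False using a unfolding separating_def Nw_def sat_def by auto
      qed
      then have "L < sz f" using xd_sz[of f] unfolding sz_def by simp
      then show "real (sz f) > 2 powr sqrt (real (sample_size Pw Nw))" using big ss by simp
    qed
    show ?thesis
      by (rule exI[of _ Pw], rule exI[of _ Nw])
         (use valid ss Sn sep0 frag0 lower in \<open>auto simp: Pw_def Nw_def finQ\<close>)
  qed
qed


end
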